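(* Assume the setting and the nsCRAIG recurrence described in the context, and let $k\ge1$ be such that $Q_k,B_k,H_k,\chi_k$ and $g_k$ (hence $\beta_{k+1}$) are defined, with nsCRAIG iterates $u^{(k)},p^{(k)}$. Then $Mu^{(k)}+Ap^{(k)}=0$ and $b-A^Tu^{(k)}+Cp^{(k)}=-\chi_k\,Ng_k$ (equal to $-\chi_k\beta_{k+1}Nq_{k+1}$ when $\beta_{k+1}>0$); in particular this residual is orthogonal to $q_1,\dots,q_k$ and $\|b-A^Tu^{(k)}+Cp^{(k)}\|_{N^{-1}}=\beta_{k+1}|\chi_k|$, so $\|b-A^Tu^{(k)}+Cp^{(k)}\|_{N^{-1}}/\|b\|_{N^{-1}}=\beta_{k+1}|\chi_k|/\beta_1$.
   Context: Setting: $M\in\mathbb{R}^{m\times m}$ is nonsymmetric and positive definite ($x^TMx>0$ for all $x\ne0$); $A\in\mathbb{R}^{m\times n}$ ($n\le m$) has full column rank; $C\in\mathbb{R}^{n\times n}$ is symmetric positive semidefinite; $b\in\mathbb{R}^n$ is nonzero; $N\in\mathbb{R}^{n\times n}$ is symmetric positive definite. Write $\|x\|_G=(x^TGx)^{1/2}$ for $G$ positive definite (for nonsymmetric $M$ this is the norm of its symmetric part). The generalized saddle point system is $Mu+Ap=0$, $A^Tu-Cp=b$, with unique solution $(u_*,p_* )$; $S=A^TM^{-1}A+C$. nsCRAIG recurrence (exact arithmetic): Initialization: $\beta_1=\|b\|_{N^{-1}}$, $q_1=N^{-1}b/\beta_1$, $Q_1=[q_1]$, $r_1=q_1$, $w_1=M^{-1}Aq_1$,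 $s_1=Cr_1$, $\alpha_1=(w_1^TMw_1+r_1^Ts_1)^{1/2}$, $v_1=w_1/\alpha_1$, $t_1=s_1/\alpha_1$, $\chi_1=\beta_1/\alpha_1$. For $k=1,2,\dots$: $\hat g_k=N^{-1}(A^Tv_k+t_k)$, $h_k=Q_k^TN\hat g_k\in\mathbb{R}^k$, $g_k=\hat g_k-Q_kh_k$, $\beta_{k+1}=\|g_k\|_N$; if $\beta_{k+1}=0$ the recurrence stops; otherwise $q_{k+1}=g_k/\beta_{k+1}$, $Q_{k+1}=[Q_k,q_{k+1}]$, $w_{k+1}=M^{-1}Aq_{k+1}-\beta_{k+1}v_k$, $r_{k+1}=q_{k+1}-(\beta_{k+1}/\alpha_k)r_k$, $s_{k+1}=Cr_{k+1}$, $\alpha_{k+1}=(w_{k+1}^TMw_{k+1}+r_{k+1}^Ts_{k+1})^{1/2}$, $v_{k+1}=w_{k+1}/\alpha_{k+1}$, $t_{k+1}=s_{k+1}/\alpha_{k+1}$, $\chi_{k+1}=-(\beta_{k+1}/\alpha_{k+1})\chi_k$. Matrices: $B_k\in\mathbb{R}^{k\times k}$ upper bidiagonal with $(B_k)_{ii}=\alpha_i$, $(B_k)_{i,i+1}=\beta_{i+1}$; $H_k\in\mathbb{R}^{k\times k}$ upper Hessenberg whose $j$-th column has entries $(H_k)_{ij}=(h_j)_i$ for $i\le j$, $(H_k)_{j+1,j}=\beta_{j+1}$ (if $j<k$), and zeros otherwise. The nsCRAIG iterates at step $k$ are $y_k=-B_k^{-1}H_k^{-1}(\beta_1e_1)$,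 $p^{(k)}=Q_ky_k$, $u^{(k)}=-M^{-1}Ap^{(k)}$, with $e_1$ the first unit vector of $\mathbb{R}^k$. *)

theory Defs
  imports "Jordan_Normal_Form.Gauss_Jordan_Elimination" "Jordan_Normal_Form.DL_Rank"
begin

text \<open>Matrix inverse (total: returns the zero matrix if the argument is singular;
  only ever applied to matrices that are invertible in the setting).\<close>
definition minv :: "real mat \<Rightarrow> real mat" where
  "minv X = (case mat_inverse X of Some Y \<Rightarrow> Y | None \<Rightarrow> 0\<^sub>m (dim_row X) (dim_col X))"

definition Gnorm :: "real mat \<Rightarrow> real vec \<Rightarrow> real" where
  "Gnorm G x = sqrt (x \<bullet> (G *\<^sub>v x))"

text \<open>State of nsCRAIG after step k (k >= 1):
  Qs = [q_1..q_k], Al = [alpha_1..alpha_k], Be = [beta_1..beta_k],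
  Hs = [h_1..h_(k-1)], and the current r_k, v_k, t_k, chi_k.\<close>
record cstate =
  Qs :: "real vec list"
  Al :: "real list"
  Be :: "real list"
  Hs :: "real vec list"
  rv :: "real vec"
  vv :: "real vec"
  tv :: "real vec"
  chi :: real

definition ns_init :: "real mat \<Rightarrow> real mat \<Rightarrow> real mat \<Rightarrow> real mat \<Rightarrow> real vec \<Rightarrow> cstate" where
  "ns_init M A C N b =
    (let beta1 = Gnorm (minv N) b;
         q1 = (1 / beta1) \<cdot>\<^sub>v (minv N *\<^sub>v b);
         r1 = q1;
         w1 = minv M *\<^sub>v (A *\<^sub>v q1);
         s1 = C *\<^sub>v r1;
         alpha1 = sqrt (w1 \<bullet> (M *\<^sub>v w1) + r1 \<bullet> s1)
     in \<lparr> Qs = [q1], Al = [alpha1], Be = [beta1], Hs = [], rv = r1,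
          vv = (1 / alpha1) \<cdot>\<^sub>v w1, tv = (1 / alpha1) \<cdot>\<^sub>v s1, chi = beta1 / alpha1 \<rparr>)"

definition Qmat :: "nat \<Rightarrow> cstate \<Rightarrow> real mat" where
  "Qmat n st = mat_of_cols n (Qs st)"

definition ns_ghat :: "real mat \<Rightarrow> real mat \<Rightarrow> real mat \<Rightarrow> real mat \<Rightarrow> real vec \<Rightarrow> cstate \<Rightarrow> real vec" where
  "ns_ghat M A C N b st = minv N *\<^sub>v (transpose_mat A *\<^sub>v vv st + tv st)"

definition ns_h :: "real mat \<Rightarrow> real mat \<Rightarrow> real mat \<Rightarrow> real mat \<Rightarrow> real vec \<Rightarrow> cstate \<Rightarrow> real vec" where
  "ns_h M A C N b st = transpose_mat (Qmat (dim_row N) st) *\<^sub>v (N *\<^sub>v ns_ghat M A C N b st)"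

definition ns_g :: "real mat \<Rightarrow> real mat \<Rightarrow> real mat \<Rightarrow> real mat \<Rightarrow> real vec \<Rightarrow> cstate \<Rightarrow> real vec" where
  "ns_g M A C N b st = ns_ghat M A C N b st - Qmat (dim_row N) st *\<^sub>v ns_h M A C N b st"

definition ns_beta_next :: "real mat \<Rightarrow> real mat \<Rightarrow> real mat \<Rightarrow> real mat \<Rightarrow> real vec \<Rightarrow> cstate \<Rightarrow> real" where
  "ns_beta_next M A C N b st = Gnorm N (ns_g M A C N b st)"

definition ns_step :: "real mat \<Rightarrow> real mat \<Rightarrow> real mat \<Rightarrow> real mat \<Rightarrow> real vec \<Rightarrow> cstate \<Rightarrow> cstate" where
  "ns_step M A C N b st =
    (let g = ns_g M A C N b st;
         beta' = ns_beta_next M A C N b st;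
         q' = (1 / beta') \<cdot>\<^sub>v g;
         w' = minv M *\<^sub>v (A *\<^sub>v q') - beta' \<cdot>\<^sub>v vv st;
         r' = q' - (beta' / last (Al st)) \<cdot>\<^sub>v rv st;
         s' = C *\<^sub>v r';
         alpha' = sqrt (w' \<bullet> (M *\<^sub>v w') + r' \<bullet> s')
     in \<lparr> Qs = Qs st @ [q'], Al = Al st @ [alpha'], Be = Be st @ [beta'],
          Hs = Hs st @ [ns_h M A C N b st], rv = r',
          vv = (1 / alpha') \<cdot>\<^sub>v w', tv = (1 / alpha') \<cdot>\<^sub>v s',
          chi = - (beta' / alpha') * chi st \<rparr>)"

text \<open>State after step k (meaningful for k >= 1).\<close>
definition nscraig :: "real mat \<Rightarrow> real mat \<Rightarrow> real mat \<Rightarrow> real mat \<Rightarrow> real vec \<Rightarrow> nat \<Rightarrow> cstate" where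
  "nscraig M A C N b k = (ns_step M A C N b ^^ (k - 1)) (ns_init M A C N b)"

text \<open>B_k: upper bidiagonal, (B_k)_ii = alpha_i, (B_k)_(i,i+1) = beta_(i+1) (0-based here).\<close>
definition Bmat :: "nat \<Rightarrow> cstate \<Rightarrow> real mat" where
  "Bmat k st = mat k k (\<lambda>(i, j). if i = j then Al st ! i
                                 else if j = i + 1 then Be st ! j else 0)"

text \<open>H_k: upper Hessenberg; column j is h_(j+1) on/above the diagonal, beta_(j+2) below it
  (0-based), where the list of h's is h_1..h_k.\<close>
definition Hmat :: "real mat \<Rightarrow> real mat \<Rightarrow> real mat \<Rightarrow> real mat \<Rightarrow> real vec \<Rightarrow> nat \<Rightarrow> cstate \<Rightarrow> real mat" where
  "Hmat M A C N b k st =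
    (let hs = Hs st @ [ns_h M A C N b st]
     in mat k k (\<lambda>(i, j). if i \<le> j then (hs ! j) $ i
                          else if i = j + 1 then Be st ! i else 0))"

definition ns_y :: "real mat \<Rightarrow> real mat \<Rightarrow> real mat \<Rightarrow> real mat \<Rightarrow> real vec \<Rightarrow> nat \<Rightarrow> real vec" where
  "ns_y M A C N b k =
    (let st = nscraig M A C N b k
     in - (minv (Bmat k st) *\<^sub>v (minv (Hmat M A C N b k st) *\<^sub>v (Be st ! 0 \<cdot>\<^sub>v unit_vec k 0))))"

definition ns_p :: "real mat \<Rightarrow> real mat \<Rightarrow> real mat \<Rightarrow> real mat \<Rightarrow> real vec \<Rightarrow> nat \<Rightarrow> real vec" where
  "ns_p M A C N b k = Qmat (dim_row N) (nscraig M A C N b k) *\<^sub>v ns_y M A C N b k"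

definition ns_u :: "real mat \<Rightarrow> real mat \<Rightarrow> real mat \<Rightarrow> real mat \<Rightarrow> real vec \<Rightarrow> nat \<Rightarrow> real vec" where
  "ns_u M A C N b k = - (minv M *\<^sub>v (A *\<^sub>v ns_p M A C N b k))"

end

theory Submission
  imports Defs
begin

lemma A_inj:
  fixes A :: "real mat"
  assumes A: "A \<in> carrier_mat m n" and r: "vec_space.rank m A = n"
    and x: "x \<in> carrier_vec n" and Ax: "A *\<^sub>v x = 0\<^sub>v m"
  shows "x = 0\<^sub>v n"
proof (rule ccontr)
  assume nz: "x \<noteq> 0\<^sub>v n"
  interpret vec_space "TYPE(real)" m .
  have dist: "distinct (cols A)"
  proof (rule ccontr)
    assume nd: "\<not> distinct (cols A)"
    obtain S where S: "maximal S (\<lambda>T. T \<subseteq> set (cols A) \<and> lin_indpt T)"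
      using maximal_exists[of "(\<lambda>T. T \<subseteq> set (cols A) \<and> lin_indpt T)" "card (set (cols A))" "{}"]
      by (meson List.finite_set card_mono empty_iff empty_subsetI finite_lin_indpt2 rev_finite_subset)
    then have "card S \<le> card (set (cols A))" by (simp add: card_mono maximal_def)
    also have "card (set (cols A)) < length (cols A)" using nd
      by (metis card_distinct card_length nat_less_le)
    finally have "card S < n" using A by simp
    then show False using rank_card_indpt[OF A S] r by simp
  qed
  have "lin_indpt (set (cols A))" using full_rank_lin_indpt[OF A r dist] .
  then show False using lin_depI[OF A x nz Ax dist] by blast
qed

lemma pd_inverse:
  fixes M :: "real mat"
  assumes M: "M \<in> carrier_mat m m"
    and pd: "\<forall>x \<in> carrier_vec m. x \<noteq> 0\<^sub>v m \<longrightarrow> x \<bullet> (M *\<^sub>v x) > 0"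
  shows "M * minv M = 1\<^sub>m m" "minv M * M = 1\<^sub>m m" "minv M \<in> carrier_mat m m"
proof -
  have "det M \<noteq> 0"
  proof
    assume "det M = 0"
    then obtain v where v: "v \<in> carrier_vec m" "v \<noteq> 0\<^sub>v m" "M *\<^sub>v v = 0\<^sub>v m"
      using det_0_iff_vec_prod_zero_field[OF M] by blast
    then show False using pd by auto
  qed
  then have U: "M \<in> Units (ring_mat TYPE(real) m ())" by (rule det_non_zero_imp_unit[OF M])
  have "mat_inverse M \<noteq> None" using mat_inverse(1)[OF M, of "()"] U by auto
  then obtain B where B: "mat_inverse M = Some B" by auto
  have "minv M = B" unfolding minv_def B by simp
  then show "M * minv M = 1\<^sub>m m" "minv M * M = 1\<^sub>m m" "minv M \<in> carrier_mat m m"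
    using mat_inverse(2)[OF M B] by auto
qed

lemma inj_inverse:
  fixes X :: "real mat"
  assumes X: "X \<in> carrier_mat k k"
    and inj: "\<And>x. x \<in> carrier_vec k \<Longrightarrow> X *\<^sub>v x = 0\<^sub>v k \<Longrightarrow> x = 0\<^sub>v k"
  shows "X * minv X = 1\<^sub>m k" "minv X * X = 1\<^sub>m k" "minv X \<in> carrier_mat k k"
proof -
  have "det X \<noteq> 0"
  proof
    assume "det X = 0"
    then obtain v where v: "v \<in> carrier_vec k" "v \<noteq> 0\<^sub>v k" "X *\<^sub>v v = 0\<^sub>v k"
      using det_0_iff_vec_prod_zero_field[OF X] by blast
    then show False using inj by auto
  qed
  then have U: "X \<in> Units (ring_mat TYPE(real) k ())" by (rule det_non_zero_imp_unit[OF X])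
  have "mat_inverse X \<noteq> None" using mat_inverse(1)[OF X, of "()"] U by auto
  then obtain B where B: "mat_inverse X = Some B" by auto
  have "minv X = B" unfolding minv_def B by simp
  then show "X * minv X = 1\<^sub>m k" "minv X * X = 1\<^sub>m k" "minv X \<in> carrier_mat k k"
    using mat_inverse(2)[OF X B] by auto
qed

lemma mat_vec_sum: fixes X :: "real mat"
  assumes X: "X \<in> carrier_mat a c" and x: "x \<in> carrier_vec c" and i: "i < a"
  shows "(X *\<^sub>v x) $ i = (\<Sum>j<c. X $$ (i, j) * x $ j)"
proof -
  have "(X *\<^sub>v x) $ i = row X i \<bullet> x" using i X by simp
  also have "\<dots> = (\<Sum>j\<in>{0..<c}. row X i $ j * x $ j)" unfolding scalar_prod_def using x by simp
  also have "\<dots> = (\<Sum>j<c. X $$ (i, j) * x $ j)"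
    by (rule sum.cong[OF atLeast0LessThan], insert X i, auto)
  finally show ?thesis .
qed

lemma mv_uminus: fixes X :: "real mat"
  shows "X \<in> carrier_mat a c \<Longrightarrow> x \<in> carrier_vec c \<Longrightarrow> X *\<^sub>v (- x) = - (X *\<^sub>v x)"
  by (intro eq_vecI) auto

lemma down_induct:
  fixes K :: nat
  assumes step: "\<And>i. i \<le> K \<Longrightarrow> (\<And>j. i < j \<Longrightarrow> j \<le> K \<Longrightarrow> P j) \<Longrightarrow> P i"
  shows "i \<le> K \<Longrightarrow> P i"
proof (induction "K - i" arbitrary: i rule: less_induct)
  case less
  show ?case by (rule step[OF less(2)], rule less(1), auto)
qed

lemma inv_mat_vec:
  fixes M :: "real mat"
  assumes M: "M \<in> carrier_mat m m" and I: "M * Mi = 1\<^sub>m m" "Mi * M = 1\<^sub>m m" "Mi \<in> carrier_mat m m"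
    and x: "x \<in> carrier_vec m"
  shows "M *\<^sub>v (Mi *\<^sub>v x) = x" "Mi *\<^sub>v (M *\<^sub>v x) = x"
proof -
  have "M *\<^sub>v (Mi *\<^sub>v x) = (M * Mi) *\<^sub>v x" by (rule assoc_mult_mat_vec[symmetric, OF M I(3) x])
  then show "M *\<^sub>v (Mi *\<^sub>v x) = x" using I x by simp
  have "Mi *\<^sub>v (M *\<^sub>v x) = (Mi * M) *\<^sub>v x" by (rule assoc_mult_mat_vec[symmetric, OF I(3) M x])
  then show "Mi *\<^sub>v (M *\<^sub>v x) = x" using I x by simp
qed

lemma mv_carr: "X \<in> carrier_mat a c \<Longrightarrow> X *\<^sub>v y \<in> carrier_vec a"
  by (metis carrier_matD(1) carrier_vec_dim_vec dim_mult_mat_vec)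

lemma mat_vec_zero: "X \<in> carrier_mat a c \<Longrightarrow> X *\<^sub>v 0\<^sub>v c = (0\<^sub>v a :: real vec)"
  by (intro eq_vecI) (auto simp: scalar_prod_def)

lemma minus_zero_eq: "(x :: real vec) \<in> carrier_vec c \<Longrightarrow> y \<in> carrier_vec c \<Longrightarrow> x - y = 0\<^sub>v c \<Longrightarrow> x = y"
proof (intro eq_vecI)
  fix i assume x: "x \<in> carrier_vec c" and y: "y \<in> carrier_vec c" and e: "x - y = 0\<^sub>v c" and i: "i < dim_vec y"
  have "(x - y) $ i = 0" using e i y by simp
  then show "x $ i = y $ i" using i x y by simp
qed (auto)

lemma vec_eq_minus: "(a::real vec) \<in> carrier_vec k \<Longrightarrow> b \<in> carrier_vec k \<Longrightarrow> a - b = c \<Longrightarrow> a = c + b"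
  by (intro eq_vecI) auto

locale nsc =
  fixes m n :: nat and M A C N :: "real mat" and b :: "real vec"
  assumes M: "M \<in> carrier_mat m m" and A: "A \<in> carrier_mat m n" and C: "C \<in> carrier_mat n n"
    and N: "N \<in> carrier_mat n n" and b: "b \<in> carrier_vec n"
    and M_pd: "\<forall>x \<in> carrier_vec m. x \<noteq> 0\<^sub>v m \<longrightarrow> x \<bullet> (M *\<^sub>v x) > 0"
    and A_rank: "vec_space.rank m A = n"
    and C_sym: "transpose_mat C = C" and C_psd: "\<forall>x \<in> carrier_vec n. x \<bullet> (C *\<^sub>v x) \<ge> 0"
    and b_nz: "b \<noteq> 0\<^sub>v n"
    and N_sym: "transpose_mat N = N" and N_pd: "\<forall>x \<in> carrier_vec n. x \<noteq> 0\<^sub>v n \<longrightarrow> x \<bullet> (N *\<^sub>v x) > 0"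
begin

definition "Mi = minv M"
definition "Ni = minv N"
definition st :: "nat \<Rightarrow> cstate" where "st j = (ns_step M A C N b ^^ j) (ns_init M A C N b)"
definition "q j = Qs (st j) ! j"
definition "al j = Al (st j) ! j"
definition "be j = Be (st j) ! j"
definition "hh j = ns_h M A C N b (st j)"
definition "gh j = ns_ghat M A C N b (st j)"
definition "gg j = ns_g M A C N b (st j)"
definition "v j = vv (st j)"
definition "r j = rv (st j)"
definition "t j = tv (st j)"
definition "ch j = chi (st j)"
definition "Wv j = (if j = 0 then Mi *\<^sub>v (A *\<^sub>v q 0) else Mi *\<^sub>v (A *\<^sub>v q j) - be j \<cdot>\<^sub>v v (j - 1))"

lemma Mi: "M * Mi = 1\<^sub>m m" "Mi * M = 1\<^sub>m m" "Mi \<in> carrier_mat m m"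
  using pd_inverse[OF M M_pd] unfolding Mi_def by auto
lemma Ni: "N * Ni = 1\<^sub>m n" "Ni * N = 1\<^sub>m n" "Ni \<in> carrier_mat n n"
  using pd_inverse[OF N N_pd] unfolding Ni_def by auto

lemma st_Suc: "st (Suc j) = ns_step M A C N b (st j)"
  unfolding st_def by simp

lemma lists: "Qs (st j) = map q [0..<Suc j] \<and> Al (st j) = map al [0..<Suc j]
   \<and> Be (st j) = map be [0..<Suc j] \<and> Hs (st j) = map hh [0..<j]"
proof (induction j)
  case 0
  show ?case by (simp add: st_def ns_init_def Let_def q_def al_def be_def)
next
  case (Suc j)
  have e: "Qs (st (Suc j)) = Qs (st j) @ [last (Qs (st (Suc j)))]"
          "Al (st (Suc j)) = Al (st j) @ [last (Al (st (Suc j)))]"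
          "Be (st (Suc j)) = Be (st j) @ [last (Be (st (Suc j)))]"
          "Hs (st (Suc j)) = Hs (st j) @ [hh j]"
    by (simp_all add: st_Suc ns_step_def Let_def hh_def)
  have "q (Suc j) = last (Qs (st (Suc j)))" unfolding q_def using Suc e(1)
    by (metis diff_zero last_conv_nth length_map length_upt nth_append_length snoc_eq_iff_butlast)
  moreover have "al (Suc j) = last (Al (st (Suc j)))" unfolding al_def using Suc e(2)
    by (metis diff_zero last_conv_nth length_map length_upt nth_append_length snoc_eq_iff_butlast)
  moreover have "be (Suc j) = last (Be (st (Suc j)))" unfolding be_def using Suc e(3)
    by (metis diff_zero last_conv_nth length_map length_upt nth_append_length snoc_eq_iff_butlast)
  ultimately show ?case using Suc e by simp
qed

lemma Qmat_eq: "Qmat (dim_row N) (st j) = mat_of_cols n (map q [0..<Suc j])"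
  using lists N unfolding Qmat_def by simp

lemma last_Al: "last (Al (st j)) = al j"
  using lists by simp

lemma rec_Suc:
  "be (Suc j) = Gnorm N (gg j)"
  "q (Suc j) = (1 / be (Suc j)) \<cdot>\<^sub>v gg j"
  "r (Suc j) = q (Suc j) - (be (Suc j) / al j) \<cdot>\<^sub>v r j"
  "al (Suc j) = sqrt (Wv (Suc j) \<bullet> (M *\<^sub>v Wv (Suc j)) + r (Suc j) \<bullet> (C *\<^sub>v r (Suc j)))"
  "v (Suc j) = (1 / al (Suc j)) \<cdot>\<^sub>v Wv (Suc j)"
  "t (Suc j) = (1 / al (Suc j)) \<cdot>\<^sub>v (C *\<^sub>v r (Suc j))"
  "ch (Suc j) = - (be (Suc j) / al (Suc j)) * ch j"
proof -
  have L: "Qs (st (Suc j)) ! Suc j = last (Qs (st (Suc j)))"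
          "Al (st (Suc j)) ! Suc j = last (Al (st (Suc j)))"
          "Be (st (Suc j)) ! Suc j = last (Be (st (Suc j)))"
    using lists[of "Suc j"] by (simp_all add: last_conv_nth del: upt_Suc)
  show b1: "be (Suc j) = Gnorm N (gg j)"
    unfolding be_def L by (simp add: st_Suc ns_step_def Let_def gg_def ns_beta_next_def)
  show q1: "q (Suc j) = (1 / be (Suc j)) \<cdot>\<^sub>v gg j"
    unfolding q_def L b1 by (simp add: st_Suc ns_step_def Let_def gg_def ns_beta_next_def)
  show r1: "r (Suc j) = q (Suc j) - (be (Suc j) / al j) \<cdot>\<^sub>v r j"
    unfolding r_def q1 b1 by (simp add: st_Suc ns_step_def Let_def gg_def ns_beta_next_def last_Al)
  have W: "Wv (Suc j) = Mi *\<^sub>v (A *\<^sub>v ((1 / be (Suc j)) \<cdot>\<^sub>v gg j)) - be (Suc j) \<cdot>\<^sub>v vv (st j)"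
    unfolding Wv_def q1 v_def by simp
  show a1: "al (Suc j) = sqrt (Wv (Suc j) \<bullet> (M *\<^sub>v Wv (Suc j)) + r (Suc j) \<bullet> (C *\<^sub>v r (Suc j)))"
    unfolding al_def L W r1 q1 b1
    by (simp add: st_Suc ns_step_def Let_def gg_def ns_beta_next_def last_Al r_def Mi_def al_def)
  show "v (Suc j) = (1 / al (Suc j)) \<cdot>\<^sub>v Wv (Suc j)"
    unfolding a1 W r1 q1 b1
    by (simp add: st_Suc ns_step_def Let_def gg_def ns_beta_next_def last_Al r_def Mi_def v_def al_def)
  show "t (Suc j) = (1 / al (Suc j)) \<cdot>\<^sub>v (C *\<^sub>v r (Suc j))"
    unfolding a1 W r1 q1 b1
    by (simp add: st_Suc ns_step_def Let_def gg_def ns_beta_next_def last_Al r_def Mi_def t_def al_def)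
  show "ch (Suc j) = - (be (Suc j) / al (Suc j)) * ch j"
    unfolding a1 W r1 q1 b1
    by (simp add: st_Suc ns_step_def Let_def gg_def ns_beta_next_def last_Al r_def Mi_def ch_def al_def)
qed

lemma rec_0:
  "be 0 = Gnorm Ni b"
  "q 0 = (1 / be 0) \<cdot>\<^sub>v (Ni *\<^sub>v b)"
  "r 0 = q 0"
  "al 0 = sqrt (Wv 0 \<bullet> (M *\<^sub>v Wv 0) + r 0 \<bullet> (C *\<^sub>v r 0))"
  "v 0 = (1 / al 0) \<cdot>\<^sub>v Wv 0"
  "t 0 = (1 / al 0) \<cdot>\<^sub>v (C *\<^sub>v r 0)"
  "ch 0 = be 0 / al 0"
  by (simp_all add: st_def ns_init_def Let_def q_def al_def be_def r_def v_def t_def ch_def Wv_def Mi_def Ni_def)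

definition "QQ j = mat_of_cols n (map q [0..<Suc j])"

lemma QQ_carr[simp]: "QQ j \<in> carrier_mat n (Suc j)" unfolding QQ_def
  using mat_of_cols_carrier[of n "map q [0..<Suc j]"] by (simp del: upt_Suc)

lemma gh_eq: "gh j = Ni *\<^sub>v (transpose_mat A *\<^sub>v v j + t j)"
  unfolding gh_def ns_ghat_def v_def t_def Ni_def by simp
lemma hh_eq: "hh j = transpose_mat (QQ j) *\<^sub>v (N *\<^sub>v gh j)"
  unfolding hh_def ns_h_def Qmat_eq QQ_def gh_def by simp
lemma gg_eq: "gg j = gh j - QQ j *\<^sub>v hh j"
  unfolding gg_def ns_g_def Qmat_eq QQ_def gh_def hh_def by simp

lemma gh_carr[simp]: "gh j \<in> carrier_vec n" unfolding gh_eq by (rule mv_carr[OF Ni(3)])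
lemma hh_carr[simp]: "hh j \<in> carrier_vec (Suc j)" unfolding hh_eq
  by (rule mv_carr, rule transpose_carrier_mat[THEN iffD2], rule QQ_carr)
lemma gg_carr[simp]: "gg j \<in> carrier_vec n" unfolding gg_eq
  using mv_carr[OF QQ_carr, of j "hh j"] by simp

lemma carr: "q j \<in> carrier_vec n \<and> r j \<in> carrier_vec n \<and> v j \<in> carrier_vec m \<and> t j \<in> carrier_vec n
   \<and> Wv j \<in> carrier_vec m"
proof (induction j)
  case 0
  have q: "q 0 \<in> carrier_vec n" unfolding rec_0(2) using mv_carr[OF Ni(3)] by simp
  have W: "Wv 0 \<in> carrier_vec m" unfolding Wv_def using mv_carr[OF Mi(3)] by simp
  show ?case using q W C unfolding rec_0(3,5,6) by simp
next
  case (Suc j)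
  have q: "q (Suc j) \<in> carrier_vec n" unfolding rec_Suc(2) by simp
  have W: "Wv (Suc j) \<in> carrier_vec m" unfolding Wv_def using mv_carr[OF Mi(3)] Suc by simp
  show ?case using q W C Suc unfolding rec_Suc(3,5,6) by simp
qed

lemma q_carr[simp]: "q j \<in> carrier_vec n" using carr by blast
lemma r_carr[simp]: "r j \<in> carrier_vec n" using carr by blast
lemma v_carr[simp]: "v j \<in> carrier_vec m" using carr by blast
lemma t_carr[simp]: "t j \<in> carrier_vec n" using carr by blast
lemma Wv_carr[simp]: "Wv j \<in> carrier_vec m" using carr by blast

lemma dimv[simp]: "dim_vec (q j) = n" "dim_vec (r j) = n" "dim_vec (v j) = m" "dim_vec (t j) = n"
  "dim_vec (gh j) = n" "dim_vec (gg j) = n" "dim_vec (hh j) = Suc j" "dim_vec (Wv j) = m"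
  using q_carr[of j] r_carr[of j] v_carr[of j] t_carr[of j] gh_carr[of j] gg_carr[of j] hh_carr[of j] Wv_carr[of j]
  by auto

lemma N_swap: "x \<in> carrier_vec n \<Longrightarrow> y \<in> carrier_vec n \<Longrightarrow> x \<bullet> (N *\<^sub>v y) = y \<bullet> (N *\<^sub>v x)"
proof -
  assume x: "x \<in> carrier_vec n" and y: "y \<in> carrier_vec n"
  have "x \<bullet> (N *\<^sub>v y) = (transpose_mat N *\<^sub>v x) \<bullet> y"
    using transpose_vec_mult_scalar[OF N y x] by simp
  also have "\<dots> = y \<bullet> (N *\<^sub>v x)" unfolding N_sym
    by (rule comm_scalar_prod[OF mv_carr[OF N] y])
  finally show ?thesis .
qed

lemma moc_T: fixes qs :: "real vec list" assumes "set qs \<subseteq> carrier_vec n" "y \<in> carrier_vec n"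
  shows "transpose_mat (mat_of_cols n qs) *\<^sub>v y = vec (length qs) (\<lambda>i. qs ! i \<bullet> y)"
proof -
  have "\<And>i. i < length qs \<Longrightarrow> qs ! i \<in> carrier_vec n" using assms(1) nth_mem by blast
  then show ?thesis by (intro eq_vecI, insert assms, auto)
qed

lemma moc_scalar: fixes qs :: "real vec list" assumes qs: "set qs \<subseteq> carrier_vec n" and y: "y \<in> carrier_vec n"
  and c: "c \<in> carrier_vec (length qs)"
  shows "y \<bullet> (mat_of_cols n qs *\<^sub>v c) = (\<Sum>l<length qs. (qs ! l \<bullet> y) * c $ l)"
proof -
  have "y \<bullet> (mat_of_cols n qs *\<^sub>v c) = (transpose_mat (mat_of_cols n qs) *\<^sub>v y) \<bullet> c"
    using transpose_vec_mult_scalar[OF mat_of_cols_carrier(1)[of n qs] c y] by simp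
  also have "\<dots> = (\<Sum>l<length qs. (qs ! l \<bullet> y) * c $ l)"
    unfolding moc_T[OF qs y] scalar_prod_def using c by (simp add: lessThan_atLeast0)
  finally show ?thesis .
qed

definition "ON j \<longleftrightarrow> (\<forall>a\<le>j. \<forall>c\<le>j. q a \<bullet> (N *\<^sub>v q c) = (if a = c then 1 else 0))"

lemma QQ_scalar: assumes y: "y \<in> carrier_vec n" and c: "c \<in> carrier_vec (Suc j)"
  shows "y \<bullet> (N *\<^sub>v (QQ j *\<^sub>v c)) = (\<Sum>l<Suc j. (q l \<bullet> (N *\<^sub>v y)) * c $ l)"
proof -
  have Qc: "QQ j *\<^sub>v c \<in> carrier_vec n" by (rule mv_carr[OF QQ_carr])
  have "y \<bullet> (N *\<^sub>v (QQ j *\<^sub>v c)) = (QQ j *\<^sub>v c) \<bullet> (N *\<^sub>v y)"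
    by (rule N_swap[OF y Qc])
  also have "\<dots> = (N *\<^sub>v y) \<bullet> (QQ j *\<^sub>v c)"
    by (rule comm_scalar_prod[OF Qc mv_carr[OF N]])
  also have "\<dots> = (\<Sum>l<Suc j. (q l \<bullet> (N *\<^sub>v y)) * c $ l)"
    unfolding QQ_def
    by (subst moc_scalar, insert c mv_carr[OF N], auto simp del: upt_Suc)
  finally show ?thesis .
qed

lemma hh_index: "l \<le> j \<Longrightarrow> hh j $ l = q l \<bullet> (N *\<^sub>v gh j)"
  unfolding hh_eq QQ_def
  by (subst moc_T, insert mv_carr[OF N], auto simp del: upt_Suc)

lemma g_orth: assumes on: "ON j" and l: "l \<le> j"
  shows "q l \<bullet> (N *\<^sub>v gg j) = 0"
proof -
  have Qh: "QQ j *\<^sub>v hh j \<in> carrier_vec n" by (rule mv_carr[OF QQ_carr])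
  have "q l \<bullet> (N *\<^sub>v gg j) = q l \<bullet> (N *\<^sub>v gh j) - q l \<bullet> (N *\<^sub>v (QQ j *\<^sub>v hh j))"
    unfolding gg_eq
    by (subst mult_minus_distrib_mat_vec[OF N gh_carr Qh], rule scalar_prod_minus_distrib[OF q_carr mv_carr[OF N] mv_carr[OF N]])
  also have "q l \<bullet> (N *\<^sub>v (QQ j *\<^sub>v hh j)) = (\<Sum>i<Suc j. (q i \<bullet> (N *\<^sub>v q l)) * hh j $ i)"
    by (rule QQ_scalar, auto)
  also have "\<dots> = (\<Sum>i<Suc j. (if i = l then hh j $ i else 0))"
    by (rule sum.cong, insert on l, auto simp: ON_def)
  also have "\<dots> = hh j $ l" using l by simp
  finally show ?thesis using hh_index[OF l] by simp
qed

lemmas dims[simp] = M A C N b Mi(3) Ni(3)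

lemma mvc0[simp]: "A *\<^sub>v x \<in> carrier_vec m" by (rule mv_carr[OF A])
lemma mvc1[simp]: "M *\<^sub>v x \<in> carrier_vec m" by (rule mv_carr[OF M])
lemma mvc2[simp]: "Mi *\<^sub>v x \<in> carrier_vec m" by (rule mv_carr[OF Mi(3)])
lemma mvc3[simp]: "N *\<^sub>v x \<in> carrier_vec n" by (rule mv_carr[OF N])
lemma mvc4[simp]: "Ni *\<^sub>v x \<in> carrier_vec n" by (rule mv_carr[OF Ni(3)])
lemma mvc5[simp]: "C *\<^sub>v x \<in> carrier_vec n" by (rule mv_carr[OF C])
lemma mvc6[simp]: "transpose_mat A *\<^sub>v x \<in> carrier_vec n" by (rule mv_carr[OF transpose_carrier_mat[THEN iffD2, OF A]])
lemma mvc7[simp]: "QQ j *\<^sub>v x \<in> carrier_vec n" by (rule mv_carr[OF QQ_carr])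

lemmas vsimps[simp] = scalar_prod_smult_distrib[of _ n] scalar_prod_smult_distrib[of _ m]
  smult_scalar_prod_distrib[of _ n] smult_scalar_prod_distrib[of _ m]
  mult_mat_vec[OF N] mult_mat_vec[OF M] mult_mat_vec[OF A] mult_mat_vec[OF Mi(3)] mult_mat_vec[OF C]
  mult_mat_vec[OF Ni(3)]

lemma dimsM[simp]: "dim_row M = m" "dim_col M = m" "dim_row Mi = m" "dim_col Mi = m"
  "dim_row A = m" "dim_col A = n" "dim_row C = n" "dim_col C = n" "dim_row N = n" "dim_col N = n"
  "dim_row Ni = n" "dim_col Ni = n"
  using carrier_matD[OF M] carrier_matD[OF Mi(3)] carrier_matD[OF A] carrier_matD[OF C]
    carrier_matD[OF N] carrier_matD[OF Ni(3)] by auto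

lemma M_Mi[simp]: "x \<in> carrier_vec m \<Longrightarrow> M *\<^sub>v (Mi *\<^sub>v x) = x"
  using inv_mat_vec[OF M Mi] by blast
lemma N_Ni[simp]: "x \<in> carrier_vec n \<Longrightarrow> N *\<^sub>v (Ni *\<^sub>v x) = x"
  using inv_mat_vec[OF N Ni] by blast

lemma M_nonneg: "x \<in> carrier_vec m \<Longrightarrow> x \<bullet> (M *\<^sub>v x) \<ge> 0"
  using M_pd by (cases "x = 0\<^sub>v m") (auto simp: mat_vec_zero[OF M] less_imp_le)
lemma N_nonneg: "x \<in> carrier_vec n \<Longrightarrow> x \<bullet> (N *\<^sub>v x) \<ge> 0"
  using N_pd by (cases "x = 0\<^sub>v n") (auto simp: mat_vec_zero[OF N] less_imp_le)

lemma al_eq: "al j = sqrt (Wv j \<bullet> (M *\<^sub>v Wv j) + r j \<bullet> (C *\<^sub>v r j))"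
  by (cases j) (simp_all add: rec_0 rec_Suc)
lemma v_eq: "v j = (1 / al j) \<cdot>\<^sub>v Wv j"
  by (cases j) (simp_all add: rec_0 rec_Suc)
lemma t_eq: "t j = (1 / al j) \<cdot>\<^sub>v (C *\<^sub>v r j)"
  by (cases j) (simp_all add: rec_0 rec_Suc)

lemma al_arg_nonneg: "0 \<le> Wv j \<bullet> (M *\<^sub>v Wv j) + r j \<bullet> (C *\<^sub>v r j)"
    using M_nonneg[of "Wv j"] C_psd[rule_format, OF r_carr[of j]] by simp
lemma al_sq: "(al j)\<^sup>2 = Wv j \<bullet> (M *\<^sub>v Wv j) + r j \<bullet> (C *\<^sub>v r j)"
  unfolding al_eq using al_arg_nonneg by simp
lemma al_nonneg: "al j \<ge> 0" unfolding al_eq using al_arg_nonneg by simp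

lemma al_zero: assumes "al j = 0" shows "Wv j = 0\<^sub>v m"
proof (rule ccontr)
  assume "Wv j \<noteq> 0\<^sub>v m"
  then have "Wv j \<bullet> (M *\<^sub>v Wv j) > 0" using M_pd by simp
  then have "(al j)\<^sup>2 > 0" unfolding al_sq using C_psd[rule_format, OF r_carr[of j]] by (smt (verit))
  then show False using assms by simp
qed

lemma Wv_al: "al j \<noteq> 0 \<Longrightarrow> Wv j = al j \<cdot>\<^sub>v v j"
  unfolding v_eq by (simp add: smult_smult_assoc)

lemma MWv_0: "M *\<^sub>v Wv 0 = A *\<^sub>v q 0"
  unfolding Wv_def by simp

lemma MWv_Suc: "M *\<^sub>v Wv (Suc j) = A *\<^sub>v q (Suc j) - be (Suc j) \<cdot>\<^sub>v (M *\<^sub>v v j)"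
  unfolding Wv_def
  by (simp add: mult_minus_distrib_mat_vec[OF M] mult_mat_vec[OF M])

lemma be0_pos: "be 0 > 0" and be0_sq: "b \<bullet> (Ni *\<^sub>v b) = (be 0)\<^sup>2"
proof -
  define y where "y = Ni *\<^sub>v b"
  have y: "y \<in> carrier_vec n" unfolding y_def by simp
  have Ny: "N *\<^sub>v y = b" unfolding y_def by simp
  have "y \<noteq> 0\<^sub>v n" using Ny b_nz mat_vec_zero[OF N] by auto
  then have "y \<bullet> (N *\<^sub>v y) > 0" using N_pd y by simp
  also have "y \<bullet> (N *\<^sub>v y) = b \<bullet> y" unfolding Ny by (rule comm_scalar_prod[OF y b])
  finally have p: "b \<bullet> (Ni *\<^sub>v b) > 0" unfolding y_def .
  then show "be 0 > 0" unfolding rec_0 Gnorm_def by simp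
  show "b \<bullet> (Ni *\<^sub>v b) = (be 0)\<^sup>2" unfolding rec_0 Gnorm_def using p by simp
qed

lemma q0_norm: "q 0 \<bullet> (N *\<^sub>v q 0) = 1"
proof -
  define y where "y = Ni *\<^sub>v b"
  have y: "y \<in> carrier_vec n" unfolding y_def by simp
  have Ny: "N *\<^sub>v y = b" unfolding y_def by simp
  have "q 0 \<bullet> (N *\<^sub>v q 0) = (1 / be 0) * (1 / be 0) * (y \<bullet> b)"
    unfolding rec_0(2) y_def[symmetric] using y Ny by (simp add: mult_mat_vec[OF N])
  also have "y \<bullet> b = (be 0)\<^sup>2" using be0_sq comm_scalar_prod[OF y b] unfolding y_def by simp
  finally show ?thesis using be0_pos by (simp add: power2_eq_square)
qed

definition "SPAN j x \<longleftrightarrow> x \<in> carrier_vec n \<and> (\<forall>y\<in>carrier_vec n. (\<forall>l\<le>j. y \<bullet> (N *\<^sub>v q l) = 0) \<longrightarrow> y \<bullet> (N *\<^sub>v x) = 0)"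

lemma A_inj': "x \<in> carrier_vec n \<Longrightarrow> y \<in> carrier_vec n \<Longrightarrow> A *\<^sub>v x = A *\<^sub>v y \<Longrightarrow> x = y"
proof -
  assume x: "x \<in> carrier_vec n" and y: "y \<in> carrier_vec n" and e: "A *\<^sub>v x = A *\<^sub>v y"
  have "A *\<^sub>v (x - y) = 0\<^sub>v m" using e x y by (simp add: mult_minus_distrib_mat_vec[OF A])
  then have "x - y = 0\<^sub>v n" using A_inj[OF A A_rank] x y by simp
  then show "x = y" using minus_zero_eq x y by blast
qed

lemma inv:
  assumes pos: "\<And>i. 1 \<le> i \<Longrightarrow> i \<le> K \<Longrightarrow> be i > 0"
  shows "j \<le> K \<Longrightarrow> ON j \<and> (\<forall>i\<le>j. al i > 0) \<and> (\<exists>x. SPAN j x \<and> M *\<^sub>v v j = A *\<^sub>v x)"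
proof (induction j)
  case 0
  have on: "ON 0" unfolding ON_def using q0_norm by simp
  have a0: "al 0 > 0"
  proof (rule ccontr)
    assume "\<not> al 0 > 0"
    then have "al 0 = 0" using al_nonneg[of 0] by simp
    then have "Wv 0 = 0\<^sub>v m" by (rule al_zero)
    then have "A *\<^sub>v q 0 = A *\<^sub>v 0\<^sub>v n" using MWv_0 mat_vec_zero[OF M] mat_vec_zero[OF A] by simp
    then have "q 0 = 0\<^sub>v n" using A_inj' by simp
    then show False using q0_norm by simp
  qed
  define x where "x = (1 / al 0) \<cdot>\<^sub>v q 0"
  have sp: "SPAN 0 x" unfolding SPAN_def x_def by (auto simp: mult_mat_vec[OF N])
  have "M *\<^sub>v v 0 = A *\<^sub>v x" unfolding v_eq x_def
    by (simp add: mult_mat_vec[OF M] mult_mat_vec[OF A] MWv_0)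
  then show ?case using on a0 sp by auto
next
  case (Suc j)
  then have IH: "ON j" "\<And>i. i \<le> j \<Longrightarrow> al i > 0" and jK: "j \<le> K" by auto
  from Suc obtain x where x: "SPAN j x" "M *\<^sub>v v j = A *\<^sub>v x" by auto
  have xc: "x \<in> carrier_vec n" using x(1) unfolding SPAN_def by simp
  define \<beta> where "\<beta> = be (Suc j)"
  have bpos: "\<beta> > 0" unfolding \<beta>_def using pos Suc(2) by simp
  have gN: "gg j \<bullet> (N *\<^sub>v gg j) = \<beta>\<^sup>2"
    using rec_Suc(1)[of j] N_nonneg[OF gg_carr[of j]] unfolding \<beta>_def Gnorm_def by simp
  have qS: "q (Suc j) = (1 / \<beta>) \<cdot>\<^sub>v gg j" unfolding \<beta>_def by (rule rec_Suc(2))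
  have o1: "q l \<bullet> (N *\<^sub>v q (Suc j)) = 0" if "l \<le> j" for l
    unfolding qS using g_orth[OF IH(1) that] by (simp add: mult_mat_vec[OF N])
  have o2: "q (Suc j) \<bullet> (N *\<^sub>v q l) = 0" if "l \<le> j" for l
    using o1[OF that] N_swap[of "q (Suc j)" "q l"] by simp
  have nS: "q (Suc j) \<bullet> (N *\<^sub>v q (Suc j)) = 1"
    unfolding qS using gN bpos by (simp add: mult_mat_vec[OF N] power2_eq_square)
  have on: "ON (Suc j)" unfolding ON_def
  proof (intro allI impI)
    fix a c assume a: "a \<le> Suc j" and c: "c \<le> Suc j"
    show "q a \<bullet> (N *\<^sub>v q c) = (if a = c then 1 else 0)"
    proof (cases "a = Suc j")
      case True
      then show ?thesis using nS o2[of c] c by (cases "c = Suc j") auto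
    next
      case False
      then have a': "a \<le> j" using a by simp
      show ?thesis
      proof (cases "c = Suc j")
        case True
        then show ?thesis using o1[OF a'] a' by auto
      next
        case False
        then show ?thesis using IH(1) a' c unfolding ON_def by auto
      qed
    qed
  qed
  have aS: "al (Suc j) > 0"
  proof (rule ccontr)
    assume "\<not> al (Suc j) > 0"
    then have "al (Suc j) = 0" using al_nonneg[of "Suc j"] by simp
    then have "Wv (Suc j) = 0\<^sub>v m" by (rule al_zero)
    then have "A *\<^sub>v q (Suc j) - \<beta> \<cdot>\<^sub>v (A *\<^sub>v x) = 0\<^sub>v m"
      using MWv_Suc[of j] mat_vec_zero[OF M] x(2) unfolding \<beta>_def by simp
    then have "A *\<^sub>v q (Suc j) = A *\<^sub>v (\<beta> \<cdot>\<^sub>v x)"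
      using minus_zero_eq[of "A *\<^sub>v q (Suc j)" m "\<beta> \<cdot>\<^sub>v (A *\<^sub>v x)"] xc
      by (simp add: mult_mat_vec[OF A])
    then have e: "q (Suc j) = \<beta> \<cdot>\<^sub>v x" using A_inj' xc by simp
    have "q (Suc j) \<bullet> (N *\<^sub>v x) = 0" using x(1) o2 unfolding SPAN_def by simp
    then have "q (Suc j) \<bullet> (N *\<^sub>v q (Suc j)) = 0"
      by (subst (2) e) (simp add: mult_mat_vec[OF N] xc)
    then show False using nS by simp
  qed
  define x' where "x' = (1 / al (Suc j)) \<cdot>\<^sub>v (q (Suc j) - \<beta> \<cdot>\<^sub>v x)"
  have x'c: "x' \<in> carrier_vec n" unfolding x'_def using xc by simp
  have sp: "SPAN (Suc j) x'" unfolding SPAN_def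
  proof (intro conjI ballI impI x'c)
    fix y assume y: "y \<in> carrier_vec n" and o: "\<forall>l\<le>Suc j. y \<bullet> (N *\<^sub>v q l) = 0"
    have "y \<bullet> (N *\<^sub>v x) = 0" using x(1) o y unfolding SPAN_def by simp
    then show "y \<bullet> (N *\<^sub>v x') = 0" unfolding x'_def using o y xc
      by (simp add: mult_mat_vec[OF N] mult_minus_distrib_mat_vec[OF N] scalar_prod_minus_distrib[OF y])
  qed
  have "M *\<^sub>v v (Suc j) = A *\<^sub>v x'" unfolding v_eq x'_def
    by (simp add: mult_mat_vec[OF M] mult_mat_vec[OF A] MWv_Suc x(2) xc mult_minus_distrib_mat_vec[OF A] \<beta>_def)
  then show ?case using on aS sp IH(2) le_Suc_eq by auto
qed

end

locale nscK = nsc +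
  fixes K :: nat
  assumes pos: "\<And>i. 1 \<le> i \<Longrightarrow> i \<le> K \<Longrightarrow> be i > 0"
begin

lemma ONK: "ON K" using inv[OF pos] by blast
lemma al_pos: "i \<le> K \<Longrightarrow> al i > 0" using inv[OF pos, of K] by blast
lemma ON_K: "a \<le> K \<Longrightarrow> c \<le> K \<Longrightarrow> q a \<bullet> (N *\<^sub>v q c) = (if a = c then 1 else 0)"
  using ONK unfolding ON_def by blast

definition "z j = (1 / al j) \<cdot>\<^sub>v r j"
definition "Gm i j = (M *\<^sub>v v i) \<bullet> v j + z i \<bullet> (C *\<^sub>v z j)"

lemma z_carr[simp]: "z j \<in> carrier_vec n" unfolding z_def by simp

lemma F1_0: "A *\<^sub>v q 0 = al 0 \<cdot>\<^sub>v (M *\<^sub>v v 0)"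
  using MWv_0 Wv_al[of 0] al_pos[of 0] by simp
lemma F1_Suc: assumes "Suc i \<le> K"
  shows "A *\<^sub>v q (Suc i) = al (Suc i) \<cdot>\<^sub>v (M *\<^sub>v v (Suc i)) + be (Suc i) \<cdot>\<^sub>v (M *\<^sub>v v i)"
proof -
  have "M *\<^sub>v Wv (Suc i) = al (Suc i) \<cdot>\<^sub>v (M *\<^sub>v v (Suc i))"
    using Wv_al[of "Suc i"] al_pos[OF assms] by simp
  then have "A *\<^sub>v q (Suc i) - be (Suc i) \<cdot>\<^sub>v (M *\<^sub>v v i) = al (Suc i) \<cdot>\<^sub>v (M *\<^sub>v v (Suc i))"
    using MWv_Suc by simp
  from vec_eq_minus[of _ m, OF _ _ this] show ?thesis by simp
qed

lemma F2_0: "q 0 = al 0 \<cdot>\<^sub>v z 0"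
  unfolding z_def rec_0(3) using al_pos[of 0] by (simp add: smult_smult_assoc)
lemma F2_Suc: assumes "Suc i \<le> K"
  shows "q (Suc i) = al (Suc i) \<cdot>\<^sub>v z (Suc i) + be (Suc i) \<cdot>\<^sub>v z i"
proof -
  have a1: "al (Suc i) \<cdot>\<^sub>v z (Suc i) = r (Suc i)" unfolding z_def using al_pos[OF assms]
    by (simp add: smult_smult_assoc)
  have a2: "be (Suc i) \<cdot>\<^sub>v z i = (be (Suc i) / al i) \<cdot>\<^sub>v r i" unfolding z_def
    by (simp add: smult_smult_assoc)
  show ?thesis unfolding a1 a2 using vec_eq_minus[of _ n, OF _ _ rec_Suc(3)[of i, symmetric]] by simp
qed
lemma F3: "t j = C *\<^sub>v z j" unfolding t_eq z_def by simp

lemma AT_swap: "x \<in> carrier_vec n \<Longrightarrow> y \<in> carrier_vec m \<Longrightarrow> x \<bullet> (transpose_mat A *\<^sub>v y) = (A *\<^sub>v x) \<bullet> y"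
proof -
  assume x: "x \<in> carrier_vec n" and y: "y \<in> carrier_vec m"
  have "x \<bullet> (transpose_mat A *\<^sub>v y) = (transpose_mat A *\<^sub>v y) \<bullet> x" by (rule comm_scalar_prod[OF x mvc6])
  also have "\<dots> = y \<bullet> (A *\<^sub>v x)" by (rule transpose_vec_mult_scalar[OF A x y])
  also have "\<dots> = (A *\<^sub>v x) \<bullet> y" by (rule comm_scalar_prod[OF y mvc0])
  finally show ?thesis .
qed

lemma F4a: "q i \<bullet> (N *\<^sub>v gh j) = (A *\<^sub>v q i) \<bullet> v j + q i \<bullet> (C *\<^sub>v z j)"
proof -
  have "q i \<bullet> (N *\<^sub>v gh j) = q i \<bullet> (transpose_mat A *\<^sub>v v j + t j)"
    unfolding gh_eq by (subst N_Ni) (auto intro: add_carrier_vec)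
  also have "\<dots> = q i \<bullet> (transpose_mat A *\<^sub>v v j) + q i \<bullet> t j"
    by (rule scalar_prod_add_distrib[OF q_carr mvc6 t_carr])
  finally show ?thesis unfolding F3 AT_swap[OF q_carr v_carr] .
qed

lemma F4: assumes "i \<le> K"
  shows "q i \<bullet> (N *\<^sub>v gh j) = al i * Gm i j + (if i = 0 then 0 else be i * Gm (i - 1) j)"
proof (cases i)
  case 0
  show ?thesis unfolding F4a 0 F1_0 Gm_def by (subst F2_0) (simp add: algebra_simps)
next
  case (Suc i')
  have i: "Suc i' \<le> K" using assms Suc by simp
  have "q i \<bullet> (N *\<^sub>v gh j) = (al i \<cdot>\<^sub>v (M *\<^sub>v v i) + be i \<cdot>\<^sub>v (M *\<^sub>v v i')) \<bullet> v j
     + (al i \<cdot>\<^sub>v z i + be i \<cdot>\<^sub>v z i') \<bullet> (C *\<^sub>v z j)"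
    unfolding F4a Suc F1_Suc[OF i] by (subst F2_Suc[OF i]) simp
  also have "\<dots> = al i * Gm i j + be i * Gm i' j"
    unfolding Gm_def
    by (simp add: add_scalar_prod_distrib[of _ m] add_scalar_prod_distrib[of _ n] algebra_simps)
  finally show ?thesis using Suc by simp
qed

lemma gg_split: "q l \<bullet> (N *\<^sub>v gg j) = q l \<bullet> (N *\<^sub>v gh j) - (\<Sum>i<Suc j. (q i \<bullet> (N *\<^sub>v q l)) * hh j $ i)"
proof -
  have "q l \<bullet> (N *\<^sub>v gg j) = q l \<bullet> (N *\<^sub>v gh j) - q l \<bullet> (N *\<^sub>v (QQ j *\<^sub>v hh j))"
    unfolding gg_eq
    by (subst mult_minus_distrib_mat_vec[OF N gh_carr mvc7], rule scalar_prod_minus_distrib[OF q_carr mv_carr[OF N] mv_carr[OF N]])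
  also have "q l \<bullet> (N *\<^sub>v (QQ j *\<^sub>v hh j)) = (\<Sum>i<Suc j. (q i \<bullet> (N *\<^sub>v q l)) * hh j $ i)"
    by (rule QQ_scalar, auto)
  finally show ?thesis .
qed

lemma gg_q: "Suc j \<le> K \<Longrightarrow> gg j = be (Suc j) \<cdot>\<^sub>v q (Suc j)"
  unfolding rec_Suc(2)[of j] using pos[of "Suc j"] by (simp add: smult_smult_assoc)

lemma F5: assumes "j < i" "i \<le> K"
  shows "q i \<bullet> (N *\<^sub>v gh j) = (if i = Suc j then be (Suc j) else 0)"
proof -
  have "(\<Sum>l<Suc j. (q l \<bullet> (N *\<^sub>v q i)) * hh j $ l) = 0"
    by (rule sum.neutral, insert assms, auto simp: ON_K)
  then have "q i \<bullet> (N *\<^sub>v gh j) = q i \<bullet> (N *\<^sub>v gg j)" using gg_split[of i j] by simp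
  also have "\<dots> = be (Suc j) * (q i \<bullet> (N *\<^sub>v q (Suc j)))" using assms by (simp add: gg_q)
  also have "\<dots> = (if i = Suc j then be (Suc j) else 0)" using assms by (simp add: ON_K)
  finally show ?thesis .
qed

lemma F6: assumes "i \<le> K" shows "Gm i i = 1"
proof -
  have a: "al i > 0" using al_pos[OF assms] .
  have "Gm i i = (1 / al i) * (1 / al i) * (Wv i \<bullet> (M *\<^sub>v Wv i) + r i \<bullet> (C *\<^sub>v r i))"
    unfolding Gm_def v_eq z_def
    using comm_scalar_prod[OF mvc1 Wv_carr, of "Wv i" i] by (simp add: algebra_simps)
  also have "\<dots> = 1" unfolding al_sq[symmetric] using a by (simp add: power2_eq_square)
  finally show ?thesis .
qed

lemma F7: "j < i \<Longrightarrow> i \<le> K \<Longrightarrow> Gm i j = 0"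
proof (induction i)
  case 0 then show ?case by simp
next
  case (Suc i')
  have a: "al (Suc i') > 0" using al_pos[OF Suc(3)] .
  have e: "al (Suc i') * Gm (Suc i') j + be (Suc i') * Gm i' j = (if Suc i' = Suc j then be (Suc j) else 0)"
    using F4[OF Suc(3), of j] F5[OF Suc(2,3)] by simp
  show ?case
  proof (cases "i' = j")
    case True
    then have "Gm i' j = 1" using F6 Suc by simp
    then show ?thesis using e a True by simp
  next
    case False
    then have "Gm i' j = 0" using Suc by simp
    then show ?thesis using e a False by simp
  qed
qed

definition "Hm = Hmat M A C N b (Suc K) (st K)"
definition "Bm = Bmat (Suc K) (st K)"

lemma Hm_carr[simp]: "Hm \<in> carrier_mat (Suc K) (Suc K)" unfolding Hm_def Hmat_def Let_def by simp
lemma Bm_carr[simp]: "Bm \<in> carrier_mat (Suc K) (Suc K)" unfolding Bm_def Bmat_def by simp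

lemma Hm_entry: assumes "i \<le> K" "j \<le> K" shows "Hm $$ (i, j) = q i \<bullet> (N *\<^sub>v gh j)"
proof -
  have hs: "Hs (st K) @ [ns_h M A C N b (st K)] = map hh [0..<Suc K]"
    using lists[of K] by (simp add: hh_def)
  have be: "Be (st K) ! i = be i" using lists[of K] assms by (simp del: upt_Suc)
  have "Hm $$ (i, j) = (if i \<le> j then hh j $ i else if i = j + 1 then be i else 0)"
    unfolding Hm_def Hmat_def Let_def hs be[symmetric] using assms by (simp del: upt_Suc)
  also have "\<dots> = q i \<bullet> (N *\<^sub>v gh j)"
    using hh_index[of i j] F5[of j i] assms by auto
  finally show ?thesis .
qed

lemma Bm_entry: assumes "i \<le> K" "j \<le> K"
  shows "Bm $$ (i, j) = (if i = j then al i else if j = i + 1 then be j else 0)"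
proof -
  have "\<And>l. l \<le> K \<Longrightarrow> Be (st K) ! l = be l" "\<And>l. l \<le> K \<Longrightarrow> Al (st K) ! l = al l"
    using lists[of K] by (simp_all del: upt_Suc)
  then show ?thesis unfolding Bm_def Bmat_def using assms by auto
qed

definition "U x i = (\<Sum>j<Suc K. Gm i j * x $ j)"

lemma Hm_row: assumes x: "x \<in> carrier_vec (Suc K)" and i: "i \<le> K"
  shows "(Hm *\<^sub>v x) $ i = al i * U x i + (if i = 0 then 0 else be i * U x (i - 1))"
proof -
  have "(Hm *\<^sub>v x) $ i = (\<Sum>j<Suc K. Hm $$ (i, j) * x $ j)"
    by (rule mat_vec_sum[OF Hm_carr x], insert i, simp)
  also have "\<dots> = (\<Sum>j<Suc K. al i * (Gm i j * x $ j) + (if i = 0 then 0 else be i * (Gm (i - 1) j * x $ j)))"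
    by (rule sum.cong, insert i, auto simp: Hm_entry F4 algebra_simps)
  also have "\<dots> = al i * U x i + (if i = 0 then 0 else be i * U x (i - 1))"
    unfolding U_def by (cases "i = 0") (simp_all add: sum.distrib sum_distrib_left del: sum.lessThan_Suc)
  finally show ?thesis .
qed

lemma U_down: assumes i: "i \<le> K" and z: "\<And>j. i < j \<Longrightarrow> j \<le> K \<Longrightarrow> x $ j = 0"
  shows "U x i = x $ i"
proof -
  have "U x i = (\<Sum>j<Suc K. if j = i then x $ i else 0)"
    unfolding U_def
  proof (rule sum.cong)
    fix j assume j: "j \<in> {..<Suc K}"
    show "Gm i j * x $ j = (if j = i then x $ i else 0)"
    proof (cases "j < i")
      case True then show ?thesis using F7[of j i] i by simp
    next
      case False
      then show ?thesis using F6[OF i] z[of j] j by (cases "j = i") auto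
    qed
  qed simp
  also have "\<dots> = x $ i" using i by simp
  finally show ?thesis .
qed

lemma U_rec: assumes x: "x \<in> carrier_vec (Suc K)"
  shows "i \<le> K \<Longrightarrow> U x i = (if i = 0 then (Hm *\<^sub>v x) $ 0 / al 0
     else ((Hm *\<^sub>v x) $ i - be i * U x (i - 1)) / al i)"
  using Hm_row[OF x, of i] al_pos[of i] by (auto simp: field_simps)

lemma Hm_inj: assumes x: "x \<in> carrier_vec (Suc K)" and h: "Hm *\<^sub>v x = 0\<^sub>v (Suc K)"
  shows "x = 0\<^sub>v (Suc K)"
proof -
  have U0: "i \<le> K \<Longrightarrow> U x i = 0" for i
  proof (induction i)
    case 0 then show ?case using U_rec[OF x, of 0] h by simp
  next
    case (Suc i) then show ?case using U_rec[OF x, of "Suc i"] h by simp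
  qed
  have "x $ i = 0" if i: "i \<le> K" for i
  proof (rule down_induct[of K "\<lambda>i. x $ i = 0", OF _ i])
    fix i assume "i \<le> K" "\<And>j. i < j \<Longrightarrow> j \<le> K \<Longrightarrow> x $ j = 0"
    then show "x $ i = 0" using U_down[of i x] U0[of i] by simp
  qed
  then show ?thesis using x by (intro eq_vecI) auto
qed

lemma Bm_inj: assumes x: "x \<in> carrier_vec (Suc K)" and h: "Bm *\<^sub>v x = 0\<^sub>v (Suc K)"
  shows "x = 0\<^sub>v (Suc K)"
proof -
  have "x $ i = 0" if i: "i \<le> K" for i
  proof (rule down_induct[of K "\<lambda>i. x $ i = 0", OF _ i])
    fix i assume 1: "i \<le> K" "\<And>j. i < j \<Longrightarrow> j \<le> K \<Longrightarrow> x $ j = 0"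
    have "0 = (Bm *\<^sub>v x) $ i" using h 1 by simp
    also have "\<dots> = (\<Sum>j<Suc K. Bm $$ (i, j) * x $ j)"
      by (rule mat_vec_sum[OF Bm_carr x], insert 1, simp)
    also have "\<dots> = (\<Sum>j<Suc K. if j = i then al i * x $ i else 0)"
      by (rule sum.cong, insert 1, auto simp: Bm_entry)
    also have "\<dots> = al i * x $ i" using 1 by simp
    finally show "x $ i = 0" using al_pos[of i] 1 by simp
  qed
  then show ?thesis using x by (intro eq_vecI) auto
qed

lemma Hm_inv: "Hm * minv Hm = 1\<^sub>m (Suc K)" "minv Hm * Hm = 1\<^sub>m (Suc K)" "minv Hm \<in> carrier_mat (Suc K) (Suc K)"
  using inj_inverse[OF Hm_carr Hm_inj] by auto
lemma Bm_inv: "Bm * minv Bm = 1\<^sub>m (Suc K)" "minv Bm * Bm = 1\<^sub>m (Suc K)" "minv Bm \<in> carrier_mat (Suc K) (Suc K)"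
  using inj_inverse[OF Bm_carr Bm_inj] by auto

definition "e0 = be 0 \<cdot>\<^sub>v unit_vec (Suc K) 0"
definition "zz = minv Hm *\<^sub>v e0"

lemma e0_carr[simp]: "e0 \<in> carrier_vec (Suc K)" unfolding e0_def by simp
lemma zz_carr[simp]: "zz \<in> carrier_vec (Suc K)" unfolding zz_def by (rule mv_carr[OF Hm_inv(3)])
lemma Hzz: "Hm *\<^sub>v zz = e0"
proof -
  have "Hm *\<^sub>v zz = (Hm * minv Hm) *\<^sub>v e0" unfolding zz_def
    by (rule assoc_mult_mat_vec[symmetric, OF Hm_carr Hm_inv(3) e0_carr])
  then show ?thesis unfolding Hm_inv(1) by simp
qed

lemma U_zz: "i \<le> K \<Longrightarrow> U zz i = ch i"
proof (induction i)
  case 0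
  show ?case using U_rec[OF zz_carr, of 0] unfolding Hzz e0_def rec_0(7) by simp
next
  case (Suc i)
  show ?case using U_rec[OF zz_carr, of "Suc i"] Suc unfolding Hzz e0_def rec_Suc(7)
    by (simp add: field_simps)
qed

lemma zzK: "zz $ K = ch K"
  using U_down[of K zz] U_zz[of K] by simp

lemma moc_Bm: fixes ws :: "real vec list"
  assumes ws: "set ws \<subseteq> carrier_vec d" "length ws = Suc K" and j: "j \<le> K"
  shows "col (mat_of_cols d ws * Bm) j = al j \<cdot>\<^sub>v ws ! j + (if j = 0 then 0\<^sub>v d else be j \<cdot>\<^sub>v ws ! (j - 1))"
proof -
  have wc: "ws ! l \<in> carrier_vec d" if l: "l < Suc K" for l
  proof -
    have "ws ! l \<in> set ws" by (rule nth_mem, simp add: ws(2) l)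
    then show ?thesis using ws(1) by blast
  qed
  have X: "mat_of_cols d ws \<in> carrier_mat d (Suc K)" using mat_of_cols_carrier(1)[of d ws] ws(2) by simp
  have wj: "ws ! j \<in> carrier_vec d" and wj': "ws ! (j - 1) \<in> carrier_vec d" using wc j by auto
  have "col (mat_of_cols d ws * Bm) j = mat_of_cols d ws *\<^sub>v col Bm j"
    by (rule col_mult2[OF X Bm_carr], insert j, simp)
  also have "\<dots> = al j \<cdot>\<^sub>v ws ! j + (if j = 0 then 0\<^sub>v d else be j \<cdot>\<^sub>v ws ! (j - 1))"
  proof (rule eq_vecI)
    fix i assume i: "i < dim_vec (al j \<cdot>\<^sub>v ws ! j + (if j = 0 then 0\<^sub>v d else be j \<cdot>\<^sub>v ws ! (j - 1)))"
    then have i: "i < d" using wj wj' by (cases "j = 0") auto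
    have cB: "col Bm j \<in> carrier_vec (Suc K)" using carrier_matD(1)[OF Bm_carr] by (intro carrier_vecI) simp
    have "(mat_of_cols d ws *\<^sub>v col Bm j) $ i = (\<Sum>l<Suc K. mat_of_cols d ws $$ (i, l) * col Bm j $ l)"
      by (rule mat_vec_sum[OF X cB i])
    also have "\<dots> = (\<Sum>l<Suc K. (if l = j then al j * ws ! j $ i else 0)
       + (if 0 < j \<and> l = j - 1 then be j * ws ! (j - 1) $ i else 0))"
    proof (rule sum.cong)
      fix l assume l: "l \<in> {..<Suc K}"
      have cl: "col Bm j $ l = Bm $$ (l, j)" using carrier_matD[OF Bm_carr] j l by (intro index_col) auto
      have ml: "mat_of_cols d ws $$ (i, l) = ws ! l $ i" using i l ws(2) by (simp add: mat_of_cols_index)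
      show "mat_of_cols d ws $$ (i, l) * col Bm j $ l = (if l = j then al j * ws ! j $ i else 0)
       + (if 0 < j \<and> l = j - 1 then be j * ws ! (j - 1) $ i else 0)"
        unfolding cl ml using Bm_entry[of l j] l j by auto
    qed simp
    also have "\<dots> = al j * ws ! j $ i + (if 0 < j then be j * ws ! (j - 1) $ i else 0)"
      using j by (simp add: sum.distrib; arith)
    also have "\<dots> = (al j \<cdot>\<^sub>v ws ! j + (if j = 0 then 0\<^sub>v d else be j \<cdot>\<^sub>v ws ! (j - 1))) $ i"
      using i wj wj' by auto
    finally show "(mat_of_cols d ws *\<^sub>v col Bm j) $ i = (al j \<cdot>\<^sub>v ws ! j + (if j = 0 then 0\<^sub>v d else be j \<cdot>\<^sub>v ws ! (j - 1))) $ i" .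
  qed (use wj wj' in simp)
  finally show ?thesis .
qed

lemma Mi_M[simp]: "x \<in> carrier_vec m \<Longrightarrow> Mi *\<^sub>v (M *\<^sub>v x) = x"
  using inv_mat_vec[OF M Mi] by blast

definition "Vm = mat_of_cols m (map v [0..<Suc K])"
definition "Tm = mat_of_cols n (map t [0..<Suc K])"
definition "GH = mat_of_cols n (map gh [0..<Suc K])"
definition "Em = mat_of_cols n (map (\<lambda>j. if j = K then gg K else 0\<^sub>v n) [0..<Suc K])"

lemma Vm_carr[simp]: "Vm \<in> carrier_mat m (Suc K)" unfolding Vm_def
  using mat_of_cols_carrier(1)[of m "map v [0..<Suc K]"] by (simp del: upt_Suc)
lemma Tm_carr[simp]: "Tm \<in> carrier_mat n (Suc K)" unfolding Tm_def
  using mat_of_cols_carrier(1)[of n "map t [0..<Suc K]"] by (simp del: upt_Suc)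
lemma GH_carr[simp]: "GH \<in> carrier_mat n (Suc K)" unfolding GH_def
  using mat_of_cols_carrier(1)[of n "map gh [0..<Suc K]"] by (simp del: upt_Suc)
lemma Em_carr[simp]: "Em \<in> carrier_mat n (Suc K)" unfolding Em_def
  using mat_of_cols_carrier(1)[of n "map (\<lambda>j. if j = K then gg K else 0\<^sub>v n) [0..<Suc K]"] by (simp del: upt_Suc)

lemma dimsK[simp]: "dim_row Bm = Suc K" "dim_col Bm = Suc K" "dim_row Hm = Suc K" "dim_col Hm = Suc K"
  "dim_row GH = n" "dim_col GH = Suc K" "dim_row Vm = m" "dim_col Vm = Suc K"
  "dim_row Tm = n" "dim_col Tm = Suc K" "dim_row Em = n" "dim_col Em = Suc K"
  "dim_row (QQ j) = n" "dim_col (QQ j) = Suc j"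
  using carrier_matD[OF Bm_carr] carrier_matD[OF Hm_carr] carrier_matD[OF GH_carr]
    carrier_matD[OF Vm_carr] carrier_matD[OF Tm_carr] carrier_matD[OF Em_carr] carrier_matD[OF QQ_carr]
  by auto

lemma col_QK: "j \<le> K \<Longrightarrow> col (QQ K) j = q j"
  unfolding QQ_def by (subst col_mat_of_cols) (auto simp del: upt_Suc simp: nth_append)
lemma col_Vm: "j \<le> K \<Longrightarrow> col Vm j = v j"
  unfolding Vm_def by (subst col_mat_of_cols) (auto simp del: upt_Suc simp: nth_append)
lemma col_Tm: "j \<le> K \<Longrightarrow> col Tm j = t j"
  unfolding Tm_def by (subst col_mat_of_cols) (auto simp del: upt_Suc simp: nth_append)
lemma col_GH: "j \<le> K \<Longrightarrow> col GH j = gh j"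
  unfolding GH_def by (subst col_mat_of_cols) (auto simp del: upt_Suc simp: nth_append)

lemma I1: "Mi * (A * QQ K) = Vm * Bm"
proof (rule mat_col_eqI)
  fix j assume "j < dim_col (Vm * Bm)"
  then have j: "j \<le> K" by simp
  have "col (Mi * (A * QQ K)) j = Mi *\<^sub>v (A *\<^sub>v q j)"
    using j by (simp add: col_mult2[OF Mi(3) mult_carrier_mat[OF A QQ_carr]] col_mult2[OF A QQ_carr] col_QK)
  also have "\<dots> = al j \<cdot>\<^sub>v v j + (if j = 0 then 0\<^sub>v m else be j \<cdot>\<^sub>v v (j - 1))"
  proof (cases j)
    case 0 then show ?thesis using F1_0 by simp
  next
    case (Suc j')
    have "A *\<^sub>v q j = M *\<^sub>v (al j \<cdot>\<^sub>v v j + be j \<cdot>\<^sub>v v j')"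
      using F1_Suc[of j'] j Suc by (simp add: mult_add_distrib_mat_vec[OF M])
    then show ?thesis using Suc by simp
  qed
  also have "\<dots> = col (Vm * Bm) j" unfolding Vm_def
    by (subst moc_Bm) (use j in \<open>auto simp del: upt_Suc simp: nth_append\<close>)
  finally show "col (Mi * (A * QQ K)) j = col (Vm * Bm) j" .
qed (auto)

lemma I2: "C * QQ K = Tm * Bm"
proof (rule mat_col_eqI)
  fix j assume "j < dim_col (Tm * Bm)"
  then have j: "j \<le> K" by simp
  have "col (C * QQ K) j = C *\<^sub>v q j"
    using j by (simp add: col_mult2[OF C QQ_carr] col_QK)
  also have "\<dots> = al j \<cdot>\<^sub>v t j + (if j = 0 then 0\<^sub>v n else be j \<cdot>\<^sub>v t (j - 1))"
  proof (cases j)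
    case 0 then show ?thesis unfolding 0 by (subst F2_0) (simp add: F3)
  next
    case (Suc j')
    have "C *\<^sub>v q j = C *\<^sub>v (al j \<cdot>\<^sub>v z j + be j \<cdot>\<^sub>v z j')"
      using F2_Suc[of j'] j Suc by simp
    then show ?thesis using Suc by (simp add: mult_add_distrib_mat_vec[OF C] F3)
  qed
  also have "\<dots> = col (Tm * Bm) j" unfolding Tm_def
    by (subst moc_Bm) (use j in \<open>auto simp del: upt_Suc simp: nth_append\<close>)
  finally show "col (C * QQ K) j = col (Tm * Bm) j" .
qed (auto)

lemma I3: "transpose_mat A * Vm + Tm = N * GH"
proof (rule mat_col_eqI)
  fix j assume "j < dim_col (N * GH)"
  then have j: "j \<le> K" by simp
  have AT: "transpose_mat A \<in> carrier_mat n m" by simp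
  have "col (transpose_mat A * Vm + Tm) j = col (transpose_mat A * Vm) j + col Tm j"
    by (rule col_add[OF mult_carrier_mat[OF AT Vm_carr] Tm_carr], use j in simp)
  also have "\<dots> = transpose_mat A *\<^sub>v v j + t j"
    using j by (simp add: col_mult2[OF AT Vm_carr] col_Vm col_Tm)
  also have "\<dots> = N *\<^sub>v gh j" unfolding gh_eq
    by (rule N_Ni[symmetric], rule add_carrier_vec, simp_all)
  also have "\<dots> = col (N * GH) j"
    using j by (simp add: col_mult2[OF N GH_carr] col_GH)
  finally show "col (transpose_mat A * Vm + Tm) j = col (N * GH) j" .
qed (auto)

lemma QQ_idx: assumes p: "p < n" and c: "c \<in> carrier_vec (Suc j)"
  shows "(QQ j *\<^sub>v c) $ p = (\<Sum>l<Suc j. q l $ p * c $ l)"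
proof -
  have "(QQ j *\<^sub>v c) $ p = (\<Sum>l<Suc j. QQ j $$ (p, l) * c $ l)" by (rule mat_vec_sum[OF QQ_carr c p])
  also have "\<dots> = (\<Sum>l<Suc j. q l $ p * c $ l)"
    by (rule sum.cong, simp, unfold QQ_def, subst mat_of_cols_index, insert p,
        auto simp del: upt_Suc simp: nth_append)
  finally show ?thesis .
qed

lemma gh_split: "p < n \<Longrightarrow> gh j $ p = gg j $ p + (QQ j *\<^sub>v hh j) $ p"
  unfolding gg_eq by simp

lemma col_Hm: assumes j: "j \<le> K" and l: "l \<le> K"
  shows "col Hm j $ l = (if l \<in> {..<Suc j} then hh j $ l else 0) + (if l = Suc j then be (Suc j) else 0)"
proof -
  have "col Hm j $ l = Hm $$ (l, j)" using j l by simp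
  also have "\<dots> = q l \<bullet> (N *\<^sub>v gh j)" using Hm_entry[OF l j] .
  also have "\<dots> = (if l \<in> {..<Suc j} then hh j $ l else 0) + (if l = Suc j then be (Suc j) else 0)"
    using hh_index[of l j] F5[of j l] l by auto
  finally show ?thesis .
qed

lemma I4: "GH = QQ K * Hm + Em"
proof (rule mat_col_eqI)
  fix j assume "j < dim_col (QQ K * Hm + Em)"
  then have j: "j \<le> K" by simp
  have cHm: "col Hm j \<in> carrier_vec (Suc K)" using carrier_matD(1)[OF Hm_carr] by (intro carrier_vecI) simp
  have cEm: "col Em j = (if j = K then gg K else 0\<^sub>v n)"
    unfolding Em_def by (subst col_mat_of_cols) (use j in \<open>auto simp del: upt_Suc simp: nth_append\<close>)
  have c1: "col (QQ K * Hm + Em) j = col (QQ K * Hm) j + col Em j"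
    by (rule col_add[OF mult_carrier_mat[OF QQ_carr Hm_carr] Em_carr], use j in simp)
  have c2: "col (QQ K * Hm) j = QQ K *\<^sub>v col Hm j"
    by (rule col_mult2[OF QQ_carr Hm_carr], use j in simp)
  have "QQ K *\<^sub>v col Hm j + col Em j = gh j"
  proof (rule eq_vecI)
    fix p assume "p < dim_vec (gh j)"
    then have p: "p < n" by simp
    have "(QQ K *\<^sub>v col Hm j) $ p = (\<Sum>l<Suc K. q l $ p * col Hm j $ l)" by (rule QQ_idx[OF p cHm])
    also have "\<dots> = (\<Sum>l<Suc K. (if l \<in> {..<Suc j} then q l $ p * hh j $ l else 0)
        + (if l = Suc j then be (Suc j) * q (Suc j) $ p else 0))"
      by (rule sum.cong, simp, subst col_Hm, insert j, auto)
    also have "\<dots> = (\<Sum>l\<in>{..<Suc K} \<inter> {..<Suc j}. q l $ p * hh j $ l)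
        + (if Suc j \<in> {..<Suc K} then be (Suc j) * q (Suc j) $ p else 0)"
      by (simp only: sum.distrib sum.inter_restrict[OF finite_lessThan] sum.delta[OF finite_lessThan])
    also have "{..<Suc K} \<inter> {..<Suc j} = {..<Suc j}" using j by auto
    also have "(\<Sum>l<Suc j. q l $ p * hh j $ l) = (QQ j *\<^sub>v hh j) $ p" by (rule QQ_idx[OF p hh_carr, symmetric])
    finally have e: "(QQ K *\<^sub>v col Hm j) $ p = (QQ j *\<^sub>v hh j) $ p
        + (if Suc j \<in> {..<Suc K} then be (Suc j) * q (Suc j) $ p else 0)" .
    show "(QQ K *\<^sub>v col Hm j + col Em j) $ p = gh j $ p"
    proof (cases "j = K")
      case True
      then show ?thesis using e p cEm gh_split[OF p, of j] by simp
    next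
      case False
      then have "Suc j \<le> K" using j by simp
      then show ?thesis using e p cEm gh_split[OF p, of j] False gg_q[of j] by simp
    qed
  qed (use cEm in simp)
  then show "col GH j = col (QQ K * Hm + Em) j" using c1 c2 col_GH[OF j] by simp
qed (auto)

lemma QQe0: "QQ K *\<^sub>v e0 = be 0 \<cdot>\<^sub>v q 0"
proof (rule eq_vecI)
  fix p assume "p < dim_vec (be 0 \<cdot>\<^sub>v q 0)"
  then have p: "p < n" by simp
  have "(QQ K *\<^sub>v e0) $ p = (\<Sum>l<Suc K. q l $ p * e0 $ l)" by (rule QQ_idx[OF p e0_carr])
  also have "\<dots> = (\<Sum>l<Suc K. if l = 0 then be 0 * q 0 $ p else 0)"
    by (rule sum.cong, auto simp: e0_def)
  also have "\<dots> = (be 0 \<cdot>\<^sub>v q 0) $ p" using p by simp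
  finally show "(QQ K *\<^sub>v e0) $ p = (be 0 \<cdot>\<^sub>v q 0) $ p" .
qed simp

lemma Emzz: "Em *\<^sub>v zz = zz $ K \<cdot>\<^sub>v gg K"
proof (rule eq_vecI)
  fix p assume "p < dim_vec (zz $ K \<cdot>\<^sub>v gg K)"
  then have p: "p < n" by simp
  have "(Em *\<^sub>v zz) $ p = (\<Sum>l<Suc K. Em $$ (p, l) * zz $ l)" by (rule mat_vec_sum[OF Em_carr zz_carr p])
  also have "\<dots> = (\<Sum>l<Suc K. if l = K then gg K $ p * zz $ K else 0)"
    by (rule sum.cong, simp, unfold Em_def, subst mat_of_cols_index, insert p,
        auto simp del: upt_Suc simp: nth_append)
  also have "\<dots> = (zz $ K \<cdot>\<^sub>v gg K) $ p" using p by simp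
  finally show "(Em *\<^sub>v zz) $ p = (zz $ K \<cdot>\<^sub>v gg K) $ p" .
qed simp

lemma Nq0: "N *\<^sub>v (be 0 \<cdot>\<^sub>v q 0) = b"
  unfolding rec_0(2) using be0_pos by (simp add: smult_smult_assoc)

lemma resid:
  defines "y \<equiv> - (minv Bm *\<^sub>v zz)"
  defines "p \<equiv> QQ K *\<^sub>v y"
  shows "M *\<^sub>v (- (Mi *\<^sub>v (A *\<^sub>v p))) + A *\<^sub>v p = 0\<^sub>v m"
    and "b - transpose_mat A *\<^sub>v (- (Mi *\<^sub>v (A *\<^sub>v p))) + C *\<^sub>v p = - ch K \<cdot>\<^sub>v (N *\<^sub>v gg K)"
proof -
  have yc: "y \<in> carrier_vec (Suc K)" unfolding y_def using mv_carr[OF Bm_inv(3)] by simp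
  have pc: "p \<in> carrier_vec n" unfolding p_def by simp
  have By: "Bm *\<^sub>v y = - zz"
  proof -
    have "Bm *\<^sub>v (minv Bm *\<^sub>v zz) = (Bm * minv Bm) *\<^sub>v zz"
      by (rule assoc_mult_mat_vec[symmetric, OF Bm_carr Bm_inv(3) zz_carr])
    then have "Bm *\<^sub>v (minv Bm *\<^sub>v zz) = zz" unfolding Bm_inv(1) by simp
    then show ?thesis unfolding y_def using mv_carr[OF Bm_inv(3), of zz]
      by (subst mv_uminus[OF Bm_carr]) auto
  qed
  have MiAp: "Mi *\<^sub>v (A *\<^sub>v p) = - (Vm *\<^sub>v zz)"
  proof -
    have "Mi *\<^sub>v (A *\<^sub>v p) = (Mi * (A * QQ K)) *\<^sub>v y" unfolding p_def
      using yc by (simp add: assoc_mult_mat_vec[OF A QQ_carr] assoc_mult_mat_vec[OF Mi(3) mult_carrier_mat[OF A QQ_carr]])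
    also have "\<dots> = Vm *\<^sub>v (Bm *\<^sub>v y)" unfolding I1 by (rule assoc_mult_mat_vec[OF Vm_carr Bm_carr yc])
    also have "\<dots> = - (Vm *\<^sub>v zz)" unfolding By by (subst mv_uminus[OF Vm_carr]) auto
    finally show ?thesis .
  qed
  have Cp: "C *\<^sub>v p = - (Tm *\<^sub>v zz)"
  proof -
    have "C *\<^sub>v p = (C * QQ K) *\<^sub>v y" unfolding p_def by (rule assoc_mult_mat_vec[symmetric, OF C QQ_carr yc])
    also have "\<dots> = Tm *\<^sub>v (Bm *\<^sub>v y)" unfolding I2 by (rule assoc_mult_mat_vec[OF Tm_carr Bm_carr yc])
    also have "\<dots> = - (Tm *\<^sub>v zz)" unfolding By by (subst mv_uminus[OF Tm_carr]) auto
    finally show ?thesis .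
  qed
  show "M *\<^sub>v (- (Mi *\<^sub>v (A *\<^sub>v p))) + A *\<^sub>v p = 0\<^sub>v m"
    by (subst mv_uminus[OF M]) (auto simp: pc)
  have AV: "transpose_mat A *\<^sub>v (Vm *\<^sub>v zz) + Tm *\<^sub>v zz = b + ch K \<cdot>\<^sub>v (N *\<^sub>v gg K)"
  proof -
    have AT: "transpose_mat A \<in> carrier_mat n m" by simp
    have "transpose_mat A *\<^sub>v (Vm *\<^sub>v zz) + Tm *\<^sub>v zz = (transpose_mat A * Vm + Tm) *\<^sub>v zz"
      by (simp add: add_mult_distrib_mat_vec[OF mult_carrier_mat[OF AT Vm_carr] Tm_carr zz_carr]
          assoc_mult_mat_vec[OF AT Vm_carr zz_carr])
    also have "\<dots> = N *\<^sub>v (GH *\<^sub>v zz)" unfolding I3 by (rule assoc_mult_mat_vec[OF N GH_carr zz_carr])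
    also have "GH *\<^sub>v zz = QQ K *\<^sub>v e0 + zz $ K \<cdot>\<^sub>v gg K"
      unfolding I4 using Hzz Emzz
      by (simp add: add_mult_distrib_mat_vec[OF mult_carrier_mat[OF QQ_carr Hm_carr] Em_carr zz_carr]
          assoc_mult_mat_vec[OF QQ_carr Hm_carr zz_carr])
    also have "N *\<^sub>v (QQ K *\<^sub>v e0 + zz $ K \<cdot>\<^sub>v gg K) = b + ch K \<cdot>\<^sub>v (N *\<^sub>v gg K)"
      unfolding QQe0 zzK by (simp add: mult_add_distrib_mat_vec[OF N] Nq0)
    finally show ?thesis .
  qed
  show "b - transpose_mat A *\<^sub>v (- (Mi *\<^sub>v (A *\<^sub>v p))) + C *\<^sub>v p = - ch K \<cdot>\<^sub>v (N *\<^sub>v gg K)"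
  proof (rule eq_vecI)
    fix i assume "i < dim_vec (- ch K \<cdot>\<^sub>v (N *\<^sub>v gg K))"
    then have i: "i < n" by simp
    have "(transpose_mat A *\<^sub>v (Vm *\<^sub>v zz)) $ i + (Tm *\<^sub>v zz) $ i = b $ i + ch K * (N *\<^sub>v gg K) $ i"
      using arg_cong[OF AV, of "\<lambda>x. x $ i"] i by simp
    then show "(b - transpose_mat A *\<^sub>v (- (Mi *\<^sub>v (A *\<^sub>v p))) + C *\<^sub>v p) $ i = (- ch K \<cdot>\<^sub>v (N *\<^sub>v gg K)) $ i"
      unfolding MiAp Cp using i by simp
  qed (simp)
qed

end

lemma (in nsc) Ni_N[simp]: "x \<in> carrier_vec n \<Longrightarrow> Ni *\<^sub>v (N *\<^sub>v x) = x"
  using inv_mat_vec[OF N Ni] by blast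

theorem mainTheorem8:
  fixes m n k :: nat and M A C N :: "real mat" and b :: "real vec"
  assumes dims: "M \<in> carrier_mat m m" "A \<in> carrier_mat m n" "C \<in> carrier_mat n n"
      "N \<in> carrier_mat n n" "b \<in> carrier_vec n" "n \<le> m"
    and M_pd: "\<forall>x \<in> carrier_vec m. x \<noteq> 0\<^sub>v m \<longrightarrow> x \<bullet> (M *\<^sub>v x) > 0"
    and A_rank: "vec_space.rank m A = n"
    and C_sym: "transpose_mat C = C" and C_psd: "\<forall>x \<in> carrier_vec n. x \<bullet> (C *\<^sub>v x) \<ge> 0"
    and b_nz: "b \<noteq> 0\<^sub>v n"
    and N_sym: "transpose_mat N = N" and N_pd: "\<forall>x \<in> carrier_vec n. x \<noteq> 0\<^sub>v n \<longrightarrow> x \<bullet> (N *\<^sub>v x) > 0"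
    and k_pos: "1 \<le> k"
    and not_stopped: "\<forall>j \<in> {1..<k}. ns_beta_next M A C N b (nscraig M A C N b j) > 0"
  shows
    "let st = nscraig M A C N b k;
         u = ns_u M A C N b k; p = ns_p M A C N b k;
         res = b - transpose_mat A *\<^sub>v u + C *\<^sub>v p;
         beta_next = ns_beta_next M A C N b st
     in M *\<^sub>v u + A *\<^sub>v p = 0\<^sub>v m
      \<and> res = - (chi st) \<cdot>\<^sub>v (N *\<^sub>v ns_g M A C N b st)
      \<and> (beta_next > 0 \<longrightarrow>
           res = - (chi st * beta_next) \<cdot>\<^sub>v (N *\<^sub>v (Qs (nscraig M A C N b (k + 1)) ! k)))
      \<and> (\<forall>i < k. Qs st ! i \<bullet> res = 0)
      \<and> Gnorm (minv N) res = beta_next * \<bar>chi st\<bar>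
      \<and> Gnorm (minv N) res / Gnorm (minv N) b = beta_next * \<bar>chi st\<bar> / Be st ! 0"
proof -
  interpret nsc m n M A C N b
    by (unfold_locales) (use dims M_pd A_rank C_sym C_psd b_nz N_sym N_pd in auto)
  define K where "K = k - 1"
  have kK: "k = Suc K" using k_pos unfolding K_def by simp
  have nc: "\<And>j. nscraig M A C N b (Suc j) = st j" unfolding nscraig_def st_def by simp
  have posb: "be i > 0" if i: "1 \<le> i" "i \<le> K" for i
  proof -
    obtain i' where i': "i = Suc i'" using i by (cases i) auto
    have "be i = ns_beta_next M A C N b (nscraig M A C N b i)"
      unfolding i' nc rec_Suc(1) ns_beta_next_def gg_def ..
    then show ?thesis using not_stopped i kK by auto
  qed
  interpret nscK m n M A C N b K by unfold_locales (rule posb)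
  have stK: "nscraig M A C N b k = st K" unfolding kK nc ..
  have stK1: "nscraig M A C N b (k + 1) = st (Suc K)" unfolding kK nc[symmetric] by simp
  have Be0: "Be (st K) ! 0 = be 0" using lists[of K] by (simp del: upt_Suc)
  have yeq: "ns_y M A C N b k = - (minv Bm *\<^sub>v zz)"
    unfolding ns_y_def Let_def kK nc zz_def e0_def Hm_def Bm_def Be0 ..
  have peq: "ns_p M A C N b k = QQ K *\<^sub>v (- (minv Bm *\<^sub>v zz))"
    unfolding ns_p_def stK Qmat_eq yeq QQ_def ..
  have ueq: "ns_u M A C N b k = - (Mi *\<^sub>v (A *\<^sub>v (QQ K *\<^sub>v (- (minv Bm *\<^sub>v zz)))))"
    unfolding ns_u_def peq Mi_def ..
  have bn: "ns_beta_next M A C N b (st K) = Gnorm N (gg K)" unfolding ns_beta_next_def gg_def ..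
  have gst: "ns_g M A C N b (st K) = gg K" unfolding gg_def ..
  define g where "g = gg K"
  define c where "c = ch K"
  define \<beta> where "\<beta> = Gnorm N g"
  have gc: "g \<in> carrier_vec n" unfolding g_def by simp
  have bsq: "\<beta>\<^sup>2 = g \<bullet> (N *\<^sub>v g)" and bnn: "\<beta> \<ge> 0"
    unfolding \<beta>_def Gnorm_def using N_nonneg[OF gc] by auto
  define res where "res = - c \<cdot>\<^sub>v (N *\<^sub>v g)"
  have R1: "M *\<^sub>v ns_u M A C N b k + A *\<^sub>v ns_p M A C N b k = 0\<^sub>v m"
    unfolding ueq peq by (rule resid(1))
  have R2: "b - transpose_mat A *\<^sub>v ns_u M A C N b k + C *\<^sub>v ns_p M A C N b k = res"
    unfolding ueq peq res_def c_def g_def by (rule resid(2))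
  have R3: "\<beta> > 0 \<longrightarrow> res = - (c * \<beta>) \<cdot>\<^sub>v (N *\<^sub>v (Qs (st (Suc K)) ! Suc K))"
  proof
    assume bp: "\<beta> > 0"
    have "Qs (st (Suc K)) ! Suc K = (1 / \<beta>) \<cdot>\<^sub>v g"
      using rec_Suc(1,2)[of K] unfolding q_def \<beta>_def g_def by simp
    then show "res = - (c * \<beta>) \<cdot>\<^sub>v (N *\<^sub>v (Qs (st (Suc K)) ! Suc K))"
      unfolding res_def using bp gc by (simp add: smult_smult_assoc)
  qed
  have R4: "\<forall>i<k. Qs (st K) ! i \<bullet> res = 0"
  proof (intro allI impI)
    fix i assume "i < k"
    then have i: "i \<le> K" using kK by simp
    have "Qs (st K) ! i = q i" using lists[of K] i by (simp del: upt_Suc)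
    then show "Qs (st K) ! i \<bullet> res = 0"
      unfolding res_def g_def using g_orth[OF ONK i] by simp
  qed
  have R5: "Gnorm (minv N) res = \<beta> * \<bar>c\<bar>"
  proof -
    have "Ni *\<^sub>v res = - c \<cdot>\<^sub>v g" unfolding res_def using gc by simp
    then have "res \<bullet> (Ni *\<^sub>v res) = c * c * ((N *\<^sub>v g) \<bullet> g)" unfolding res_def using gc by simp
    also have "(N *\<^sub>v g) \<bullet> g = \<beta>\<^sup>2" unfolding bsq by (rule comm_scalar_prod[OF mvc3 gc])
    finally have "res \<bullet> (Ni *\<^sub>v res) = (\<beta> * \<bar>c\<bar>)\<^sup>2" by (simp add: power2_eq_square)
    then show ?thesis unfolding Gnorm_def Ni_def[symmetric] using bnn by simp
  qed
  have R6: "Gnorm (minv N) b = Be (st K) ! 0" unfolding Be0 rec_0(1) Ni_def ..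
  show ?thesis
    unfolding Let_def stK gst stK1 R2 bn g_def[symmetric] \<beta>_def[symmetric] c_def[symmetric] ch_def[symmetric]
    using R1 R3 R4 R5 R6 kK res_def by (simp add: mult.commute)
qed

end
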